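(* Let $t$ be a positive integer, $w\ge\lceil (t+1)/2\rceil$ an integer, and $V$ a voter matrix with $t$ topics and $n$ voters such that $md_V<w$. For $l=0,\dots,t$ let $v_l$ be the number of rows of $V$ with exactly $l$ entries $Y$. Then for every $k=w,\dots,t$, $$s_{k,0}v_0+s_{k,1}v_1+\dots+s_{k,t}v_t\le s_{k,t}\left\lfloor\frac{n-1}{2}\right\rfloor.$$
   Context: A voter matrix with $t$ topics is a matrix $V\in\{Y,N\}^{n\times t}$ for some positive integer $n$ (rows are voters), subject to the standing assumption that in every column the number of entries $Y$ is at least the number of entries $N$. A proposal is a vector in $\{Y,N\}^t$; a $k$-proposal is one with exactly $k$ entries $Y$, and an $l$-voter is a vector (row) with exactly $l$ entries $Y$. A voter $v$ supports a proposal $p$ if the Hamming distance between $v$ and $p$ is at most $t/2$; $p$ is supported by $V$ if at least $n/2$ rows of $V$ support $p$. $md_V$ is the maximum number of entries $Y$ of a proposal supported by $V$. $s_{k,l}$ denotes the number of $k$-proposals supported by a given $l$-voter (independent of the choice of $l$-voter). *)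

theory Defs
  imports Main
begin

text \<open>Entries: True = Y, False = N. Topics are 0..<t, voters (rows) are 0..<n.
  A voter matrix is a function V with V i j the entry of row i, column j.
  Vectors in {Y,N}^t are functions nat => bool, only arguments < t matter.\<close>

definition num_Y :: "nat \<Rightarrow> (nat \<Rightarrow> bool) \<Rightarrow> nat" where
  "num_Y t p = card {j. j < t \<and> p j}"

definition hamming :: "nat \<Rightarrow> (nat \<Rightarrow> bool) \<Rightarrow> (nat \<Rightarrow> bool) \<Rightarrow> nat" where
  "hamming t v p = card {j. j < t \<and> v j \<noteq> p j}"

definition voter_matrix :: "nat \<Rightarrow> nat \<Rightarrow> (nat \<Rightarrow> nat \<Rightarrow> bool) \<Rightarrow> bool" where
  "voter_matrix t n V \<longleftrightarrow> 0 < n \<and>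
     (\<forall>j<t. card {i. i < n \<and> \<not> V i j} \<le> card {i. i < n \<and> V i j})"

text \<open>Proposals are normalised to be False outside 0..<t, so that the set of proposals is finite.\<close>
definition proposal :: "nat \<Rightarrow> (nat \<Rightarrow> bool) \<Rightarrow> bool" where
  "proposal t p \<longleftrightarrow> (\<forall>j\<ge>t. \<not> p j)"

definition supports :: "nat \<Rightarrow> (nat \<Rightarrow> bool) \<Rightarrow> (nat \<Rightarrow> bool) \<Rightarrow> bool" where
  "supports t v p \<longleftrightarrow> 2 * hamming t v p \<le> t"

definition supported :: "nat \<Rightarrow> nat \<Rightarrow> (nat \<Rightarrow> nat \<Rightarrow> bool) \<Rightarrow> (nat \<Rightarrow> bool) \<Rightarrow> bool" where
  "supported t n V p \<longleftrightarrow> n \<le> 2 * card {i. i < n \<and> supports t (V i) p}"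

text \<open>s_{k,l}: number of k-proposals supported by the (canonical) l-voter whose first l entries are Y.\<close>
definition s_count :: "nat \<Rightarrow> nat \<Rightarrow> nat \<Rightarrow> nat" where
  "s_count t k l = card {p. proposal t p \<and> num_Y t p = k \<and> supports t (\<lambda>j. j < l) p}"

definition v_count :: "nat \<Rightarrow> nat \<Rightarrow> (nat \<Rightarrow> nat \<Rightarrow> bool) \<Rightarrow> nat \<Rightarrow> nat" where
  "v_count t n V l = card {i. i < n \<and> num_Y t (V i) = l}"

end

theory Submission
  imports Defs
begin

lemma card_perm_pre:
  assumes "bij_betw \<tau> {..<t} {..<(t::nat)}"
  shows "card {j. j < t \<and> Q (\<tau> j)} = card {i. i < t \<and> Q i}"
proof -
  have inj: "inj_on \<tau> {j. j < t \<and> Q (\<tau> j)}"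
    using assms unfolding bij_betw_def by (auto intro: inj_on_subset)
  have "\<tau> ` {j. j < t \<and> Q (\<tau> j)} = {i. i < t \<and> Q i}"
  proof
    show "\<tau> ` {j. j < t \<and> Q (\<tau> j)} \<subseteq> {i. i < t \<and> Q i}"
      using assms unfolding bij_betw_def by auto
    show "{i. i < t \<and> Q i} \<subseteq> \<tau> ` {j. j < t \<and> Q (\<tau> j)}"
    proof
      fix i assume "i \<in> {i. i < t \<and> Q i}"
      then have "i \<in> \<tau> ` {..<t}" "Q i" using assms unfolding bij_betw_def by auto
      then obtain j where "j < t" "i = \<tau> j" by auto
      then show "i \<in> \<tau> ` {j. j < t \<and> Q (\<tau> j)}" using \<open>Q i\<close> by auto
    qed
  qed
  then show ?thesis using card_image[OF inj] by simp
qed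

lemma exists_perm:
  fixes v :: "nat \<Rightarrow> bool"
  shows "\<exists>\<tau>. bij_betw \<tau> {..<t} {..<t} \<and> (\<forall>j<t. v j \<longleftrightarrow> \<tau> j < num_Y t v)"
proof -
  define A where "A = {j. j < t \<and> v j}"
  define B where "B = {j. j < t \<and> \<not> v j}"
  define l where "l = num_Y t v"
  have cA: "card A = l" unfolding A_def l_def num_Y_def by simp
  have fA: "finite A" "finite B" unfolding A_def B_def by auto
  have AB: "A \<union> B = {..<t}" "A \<inter> B = {}" unfolding A_def B_def by auto
  have "card A + card B = t" using card_Un_disjoint[OF fA AB(2)] AB(1) by simp
  then have cB: "card B = card {l..<t}" using cA by simp
  have lt: "l \<le> t" using \<open>card A + card B = t\<close> cA by simp
  obtain f where f: "bij_betw f A {..<l}" using bij_betw_iff_card[OF fA(1), of "{..<l}"] cA by auto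
  obtain g where g: "bij_betw g B {l..<t}" using bij_betw_iff_card[OF fA(2), of "{l..<t}"] cB by auto
  define \<tau> where "\<tau> = (\<lambda>j. if v j then f j else g j)"
  have f': "bij_betw \<tau> A {..<l}" using f by (rule bij_betw_cong[THEN iffD1, rotated]) (auto simp: \<tau>_def A_def)
  have g': "bij_betw \<tau> B {l..<t}" using g by (rule bij_betw_cong[THEN iffD1, rotated]) (auto simp: \<tau>_def B_def)
  have "bij_betw \<tau> (A \<union> B) ({..<l} \<union> {l..<t})" by (rule bij_betw_combine[OF f' g']) auto
  moreover have "{..<l} \<union> {l..<t} = {..<t}" using lt by auto
  ultimately have b: "bij_betw \<tau> {..<t} {..<t}" using AB by simp
  have "\<forall>j<t. v j \<longleftrightarrow> \<tau> j < l"
  proof (intro allI impI)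
    fix j assume "j < t"
    show "v j \<longleftrightarrow> \<tau> j < l"
    proof (cases "v j")
      case True then have "j \<in> A" using \<open>j<t\<close> by (simp add: A_def)
      then show ?thesis using f' True unfolding bij_betw_def by auto
    next
      case False then have "j \<in> B" using \<open>j<t\<close> by (simp add: B_def)
      then have "\<tau> j \<in> {l..<t}" using g' unfolding bij_betw_def by blast
      then show ?thesis using False by simp
    qed
  qed
  then show ?thesis using b l_def by blast
qed

lemma s_count_le:
  fixes v :: "nat \<Rightarrow> bool"
  assumes fin: "finite {p. proposal t p}"
  shows "s_count t k (num_Y t v) \<le> card {p. proposal t p \<and> num_Y t p = k \<and> supports t v p}"
proof -
  obtain \<tau> where b: "bij_betw \<tau> {..<t} {..<t}" and tv: "\<forall>j<t. v j \<longleftrightarrow> \<tau> j < num_Y t v"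
    using exists_perm by blast
  define l where "l = num_Y t v"
  define \<Phi> where "\<Phi> = (\<lambda>p j. j < t \<and> p (\<tau> j))"
  let ?S = "{p. proposal t p \<and> num_Y t p = k \<and> supports t (\<lambda>j. j < l) p}"
  let ?T = "{p. proposal t p \<and> num_Y t p = k \<and> supports t v p}"
  have inj: "inj_on \<Phi> ?S"
  proof (rule inj_onI)
    fix p q assume p: "p \<in> ?S" and q: "q \<in> ?S" and e: "\<Phi> p = \<Phi> q"
    show "p = q"
    proof
      fix i
      show "p i = q i"
      proof (cases "i < t")
        case True
        then have "i \<in> \<tau> ` {..<t}" using b unfolding bij_betw_def by auto
        then obtain j where "j < t" "i = \<tau> j" by auto
        then show ?thesis using fun_cong[OF e, of j] unfolding \<Phi>_def by auto
      next
        case False then show ?thesis using p q by (auto simp: proposal_def)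
      qed
    qed
  qed
  have sub: "\<Phi> ` ?S \<subseteq> ?T"
  proof
    fix r assume "r \<in> \<Phi> ` ?S"
    then obtain p where p: "p \<in> ?S" and r: "r = \<Phi> p" by auto
    have "proposal t r" unfolding r \<Phi>_def proposal_def by auto
    moreover have "num_Y t r = num_Y t p"
      unfolding r \<Phi>_def num_Y_def using card_perm_pre[OF b, of p] by simp
    moreover have "hamming t v r = hamming t (\<lambda>j. j < l) p"
    proof -
      have "{j. j < t \<and> v j \<noteq> r j} = {j. j < t \<and> (\<tau> j < l) \<noteq> p (\<tau> j)}"
        using tv unfolding r \<Phi>_def l_def by auto
      then show ?thesis unfolding hamming_def
        using card_perm_pre[OF b, of "\<lambda>i. (i < l) \<noteq> p i"] by simp
    qed
    ultimately show "r \<in> ?T" using p by (simp add: supports_def)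
  qed
  have "finite ?T" using fin by (auto intro: finite_subset)
  then have "card (\<Phi> ` ?S) \<le> card ?T" using sub by (rule card_mono)
  then show ?thesis using card_image[OF inj] unfolding s_count_def l_def by simp
qed

lemma finite_props: "finite {p. proposal t p}"
proof -
  have "{p. proposal t p} \<subseteq> (\<lambda>S j. j \<in> S) ` Pow {..<t}"
  proof
    fix p assume "p \<in> {p. proposal t p}"
    then have "p = (\<lambda>j. j \<in> {j. p j})" "{j. p j} \<in> Pow {..<t}"
      by (auto simp: proposal_def not_less[symmetric])
    then show "p \<in> (\<lambda>S j. j \<in> S) ` Pow {..<t}" by blast
  qed
  then show ?thesis by (rule finite_subset) auto
qed

lemma card_as_sum: "finite I \<Longrightarrow> card {i \<in> I. P i} = (\<Sum>i\<in>I. if P i then 1 else 0)"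
proof -
  assume f: "finite I"
  have "{i \<in> I. P i} = I \<inter> {i. P i}" by auto
  then show ?thesis using f by (simp add: sum.If_cases)
qed

theorem lemma4p5:
  fixes t n w k :: nat and V :: "nat \<Rightarrow> nat \<Rightarrow> bool"
  assumes "0 < t"
    and "(t + 2) div 2 \<le> w"
    and "voter_matrix t n V"
    and md: "\<forall>p. proposal t p \<and> supported t n V p \<longrightarrow> num_Y t p < w"
    and "w \<le> k" and "k \<le> t"
  shows "(\<Sum>l\<le>t. s_count t k l * v_count t n V l) \<le> s_count t k t * ((n - 1) div 2)"
proof -
  define P where "P = {p. proposal t p \<and> num_Y t p = k}"
  have finP: "finite P" unfolding P_def using finite_props by (auto intro: finite_subset)
  have sP: "s_count t k t = card P"
  proof -
    have "supports t (\<lambda>j. j < t) p" if "p \<in> P" for p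
    proof -
      have "{j. j < t \<and> (j < t) \<noteq> p j} = {j. j < t} - {j. j < t \<and> p j}" by auto
      then have "hamming t (\<lambda>j. j < t) p = t - k"
        using that card_Diff_subset[of "{j. j < t \<and> p j}" "{j. j < t}"]
        by (auto simp: hamming_def P_def num_Y_def)
      then show ?thesis using assms(2,5) by (simp add: supports_def)
    qed
    then show ?thesis unfolding s_count_def P_def by (metis (mono_tags, lifting) P_def mem_Collect_eq)
  qed
  have each: "card {i. i < n \<and> supports t (V i) p} \<le> (n - 1) div 2" if "p \<in> P" for p
  proof -
    have "\<not> supported t n V p" using md that assms(5) unfolding P_def by auto
    then show ?thesis unfolding supported_def by linarith
  qed
  have "(\<Sum>l\<le>t. s_count t k l * v_count t n V l) = (\<Sum>i<n. s_count t k (num_Y t (V i)))"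
  proof -
    have im: "(\<lambda>i. num_Y t (V i)) ` {..<n} \<subseteq> {..t}"
      by (auto simp: num_Y_def intro!: card_mono[where B="{..<t}", simplified])
    have "(\<Sum>i<n. s_count t k (num_Y t (V i))) =
       (\<Sum>l\<le>t. \<Sum>i\<in>{i \<in> {..<n}. num_Y t (V i) = l}. s_count t k (num_Y t (V i)))"
      using sum.group[OF _ _ im, of "\<lambda>i. s_count t k (num_Y t (V i))"] by simp
    also have "\<dots> = (\<Sum>l\<le>t. s_count t k l * v_count t n V l)"
      by (intro sum.cong refl) (simp add: v_count_def)
    finally show ?thesis by simp
  qed
  also have "\<dots> \<le> (\<Sum>i<n. card {p \<in> P. supports t (V i) p})"
    by (intro sum_mono) (simp add: s_count_le[OF finite_props] P_def conj_assoc)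
  also have "\<dots> = (\<Sum>i<n. \<Sum>p\<in>P. if supports t (V i) p then 1 else 0)"
    using finP by (simp add: card_as_sum)
  also have "\<dots> = (\<Sum>p\<in>P. \<Sum>i<n. if supports t (V i) p then 1 else 0)"
    by (rule sum.swap)
  also have "\<dots> = (\<Sum>p\<in>P. card {i \<in> {..<n}. supports t (V i) p})"
    by (intro sum.cong refl, subst card_as_sum) auto
  also have "\<dots> \<le> (\<Sum>p\<in>P. (n - 1) div 2)"
    by (intro sum_mono) (use each in auto)
  also have "\<dots> = s_count t k t * ((n - 1) div 2)" using sP by simp
  finally show ?thesis .
qed

end
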